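(* Let $A$ be an archimedean $*$-algebra, $x\in A$ with $x=x^*$, and $\bar x$ its image in $C^*(A)$. Then $\bar x\geq0$ in $C^*(A)$ if and only if $x+\alpha\in A_+$ for every positive rational $\alpha$.
   Context: A $*$-algebra is a unital algebra over $\mathbb{Q}$ with a $\mathbb{Q}$-linear involution $x\mapsto x^*$ satisfying $(xy)^*=y^*x^*$; rational scalars are identified with multiples of the unit. $A_+=\{\sum_{i=1}^n x_i^*x_i: n\in\mathbb{N},x_i\in A\}$, and $x\leq y$ means $y-x\in A_+$. For $x\in A$, $\|x\|=\sqrt{\inf\{\alpha\in\mathbb{Q}_{>0}: x^*x\leq\alpha\}}\in[0,\infty]$; $A_i=\{x:\|x\|=0\}$. $A$ is archimedean if $-1\notin A_+$ and $\|x\|<\infty$ for all $x$. $C^*(A)=\mathbb{C}\otimes_{\mathbb{R}}C^*_{\mathbb{R}}(A)$, where $C^*_{\mathbb{R}}(A)$ is the completion of $A/A_i$ with respect to the norm induced by $\|\cdot\|$. *)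

theory Defs
  imports Complex_Main "HOL-Library.Extended_Real"
begin

class rat_algebra = ring_1 +
  fixes scaleQ :: "rat \<Rightarrow> 'a \<Rightarrow> 'a"
  assumes scaleQ_add_left: "scaleQ (a + b) x = scaleQ a x + scaleQ b x"
    and scaleQ_add_right: "scaleQ a (x + y) = scaleQ a x + scaleQ a y"
    and scaleQ_scaleQ: "scaleQ a (scaleQ b x) = scaleQ (a * b) x"
    and scaleQ_one: "scaleQ 1 x = x"
    and scaleQ_mult_left: "scaleQ a (x * y) = scaleQ a x * y"
    and scaleQ_mult_right: "scaleQ a (x * y) = x * scaleQ a y"

class star_algebra = rat_algebra +
  fixes invol :: "'a \<Rightarrow> 'a"
  assumes invol_add: "invol (x + y) = invol x + invol y"
    and invol_scaleQ: "invol (scaleQ a x) = scaleQ a (invol x)"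
    and invol_invol: "invol (invol x) = x"
    and invol_mult: "invol (x * y) = invol y * invol x"

definition ratA :: "rat \<Rightarrow> 'a::star_algebra" where
  "ratA q = scaleQ q 1"

definition posCone :: "'a::star_algebra set" where
  "posCone = {z. \<exists>xs::'a list. z = sum_list (map (\<lambda>y. invol y * y) xs)}"

definition sle :: "'a::star_algebra \<Rightarrow> 'a \<Rightarrow> bool" where
  "sle x y \<longleftrightarrow> y - x \<in> posCone"

definition bound_set :: "'a::star_algebra \<Rightarrow> rat set" where
  "bound_set x = {\<alpha>. \<alpha> > 0 \<and> sle (invol x * x) (ratA \<alpha>)}"

definition anorm :: "'a::star_algebra \<Rightarrow> ereal" where
  "anorm x = (if bound_set x = {} then \<infinity>
              else ereal (sqrt (Inf (real_of_rat ` bound_set x))))"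

definition archimedean_star :: "'a::star_algebra itself \<Rightarrow> bool" where
  "archimedean_star _ \<longleftrightarrow> (- 1 :: 'a) \<notin> posCone \<and> (\<forall>x::'a. anorm x < \<infinity>)"

text \<open>Cauchy sequences in A for the seminorm; they represent the points of the
  completion C*_R(A) of A/A_i.\<close>
definition acauchy :: "(nat \<Rightarrow> 'a::star_algebra) \<Rightarrow> bool" where
  "acauchy u \<longleftrightarrow> (\<forall>e>0. \<exists>N. \<forall>m\<ge>N. \<forall>n\<ge>N. anorm (u m - u n) < ereal e)"

text \<open>Points of C*(A) = C \<otimes>_R C*_R(A), represented as (real part, imaginary part),
  each a Cauchy sequence in A.\<close>
type_synonym 'a cs = "(nat \<Rightarrow> 'a) \<times> (nat \<Rightarrow> 'a)"

definition cs_valid :: "'a::star_algebra cs \<Rightarrow> bool" where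
  "cs_valid z \<longleftrightarrow> acauchy (fst z) \<and> acauchy (snd z)"

definition cs_eq :: "'a::star_algebra cs \<Rightarrow> 'a cs \<Rightarrow> bool" where
  "cs_eq z w \<longleftrightarrow> ((\<lambda>n. anorm (fst z n - fst w n)) \<longlonglongrightarrow> 0)
                 \<and> ((\<lambda>n. anorm (snd z n - snd w n)) \<longlonglongrightarrow> 0)"

text \<open>Product (a + ib)(c + id) = (ac - bd) + i(ad + bc), extended by continuity.\<close>
definition cs_mult :: "'a::star_algebra cs \<Rightarrow> 'a cs \<Rightarrow> 'a cs" where
  "cs_mult z w = ((\<lambda>n. fst z n * fst w n - snd z n * snd w n),
                  (\<lambda>n. fst z n * snd w n + snd z n * fst w n))"

definition cs_star :: "'a::star_algebra cs \<Rightarrow> 'a cs" where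
  "cs_star z = ((\<lambda>n. invol (fst z n)), (\<lambda>n. - invol (snd z n)))"

definition cs_of :: "'a::star_algebra \<Rightarrow> 'a cs" where
  "cs_of x = ((\<lambda>_. x), (\<lambda>_. 0))"

definition cs_pos :: "'a::star_algebra cs \<Rightarrow> bool" where
  "cs_pos z \<longleftrightarrow> (\<exists>y. cs_valid y \<and> cs_eq z (cs_mult (cs_star y) y))"

end

theory Submission
  imports Defs "HOL-Computational_Algebra.Formal_Power_Series"
begin


lemma scaleQ_0_left [simp]: "scaleQ 0 (x::'a::star_algebra) = 0"
proof -
  have "scaleQ 0 x = scaleQ 0 x + scaleQ 0 x" using scaleQ_add_left[of 0 0 x] by simp
  then show ?thesis by simp
qed

lemma scaleQ_0_right [simp]: "scaleQ a (0::'a::star_algebra) = 0"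
proof -
  have "scaleQ a (0::'a) = scaleQ a 0 + scaleQ a 0" using scaleQ_add_right[of a 0 0] by simp
  then show ?thesis by simp
qed

lemma scaleQ_minus_right: "scaleQ a (- x) = - scaleQ a (x::'a::star_algebra)"
  using scaleQ_add_right[of a x "-x"] add.inverse_unique[of "scaleQ a x" "scaleQ a (-x)"] by simp

lemma scaleQ_diff_right: "scaleQ a (x - y) = scaleQ a x - scaleQ a (y::'a::star_algebra)"
  using scaleQ_add_right[of a x "-y"] by (simp add: scaleQ_minus_right)

lemma scaleQ_minus_left: "scaleQ (- a) x = - scaleQ a (x::'a::star_algebra)"
  using scaleQ_add_left[of a "-a" x] add.inverse_unique[of "scaleQ a x" "scaleQ (-a) x"] by simp

lemma scaleQ_diff_left: "scaleQ (a - b) x = scaleQ a x - scaleQ b (x::'a::star_algebra)"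
  using scaleQ_add_left[of a "-b" x] by (simp add: scaleQ_minus_left)

lemma scaleQ_sum_left: "scaleQ (sum f S) (x::'a::star_algebra) = (\<Sum>i\<in>S. scaleQ (f i) x)"
  by (induction S rule: infinite_finite_induct) (auto simp: scaleQ_add_left)

lemma scaleQ_sum_right: "scaleQ a (sum f S) = (\<Sum>i\<in>S. scaleQ a (f i::'a::star_algebra))"
  by (induction S rule: infinite_finite_induct) (auto simp: scaleQ_add_right)

lemma scaleQ_mult_left': "scaleQ a x * y = scaleQ a (x * (y::'a::star_algebra))"
  by (simp add: scaleQ_mult_left)

lemma scaleQ_mult_right': "x * scaleQ a y = scaleQ a (x * (y::'a::star_algebra))"
  by (simp add: scaleQ_mult_right)

lemma invol_0 [simp]: "invol (0::'a::star_algebra) = 0"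
  using invol_add[of "0::'a" 0] by simp

lemma invol_minus: "invol (- x) = - invol (x::'a::star_algebra)"
  using invol_add[of x "-x"] add.inverse_unique[of "invol x" "invol (-x)"] by simp

lemma invol_diff: "invol (x - y) = invol x - invol (y::'a::star_algebra)"
  using invol_add[of x "-y"] by (simp add: invol_minus)

lemma invol_1 [simp]: "invol (1::'a::star_algebra) = 1"
  using invol_mult[of "invol (1::'a)" 1] by (simp add: invol_invol)

lemma invol_sum: "invol (sum f S) = (\<Sum>i\<in>S. invol (f i::'a::star_algebra))"
  by (induction S rule: infinite_finite_induct) (auto simp: invol_add)

lemma ratA_0 [simp]: "ratA 0 = 0" by (simp add: ratA_def)
lemma ratA_1 [simp]: "ratA 1 = 1" by (simp add: ratA_def scaleQ_one)
lemma ratA_add: "ratA (a + b) = ratA a + ratA b" by (simp add: ratA_def scaleQ_add_left)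
lemma ratA_diff: "ratA (a - b) = ratA a - ratA b" by (simp add: ratA_def scaleQ_diff_left)
lemma ratA_minus: "ratA (- a) = - ratA a" by (simp add: ratA_def scaleQ_minus_left)
lemma ratA_mult_left: "ratA a * x = scaleQ a x"
  by (simp add: ratA_def scaleQ_mult_left')
lemma ratA_mult_right: "x * ratA a = scaleQ a x"
  by (simp add: ratA_def scaleQ_mult_right')
lemma scaleQ_ratA: "scaleQ a (ratA b) = ratA (a * b)"
  by (simp add: ratA_def scaleQ_scaleQ)
lemma ratA_mult: "ratA a * ratA b = ratA (a * b)"
  by (simp add: ratA_mult_left scaleQ_ratA)
lemma invol_ratA [simp]: "invol (ratA a) = ratA a"
  by (simp add: ratA_def invol_scaleQ)
lemma ratA_commute: "ratA a * x = x * ratA a"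
  by (simp add: ratA_mult_left ratA_mult_right)



section \<open>The cone\<close>

abbreviation herm :: "'a::star_algebra \<Rightarrow> bool" where "herm z \<equiv> invol z = z"

lemma posCone_0 [simp]: "0 \<in> posCone"
  unfolding posCone_def by (rule CollectI, rule exI[of _ "[]"]) simp

lemma posCone_add: "p \<in> posCone \<Longrightarrow> q \<in> posCone \<Longrightarrow> p + q \<in> posCone"
  unfolding posCone_def
proof (elim CollectE exE, intro CollectI)
  fix xs ys assume "p = sum_list (map (\<lambda>y. invol y * y) xs)" "q = sum_list (map (\<lambda>y. invol y * y) ys)"
  then show "\<exists>zs. p + q = sum_list (map (\<lambda>y::'a. invol y * y) zs)"
    by (intro exI[of _ "xs @ ys"]) simp
qed

lemma posCone_sq: "invol y * y \<in> posCone"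
  unfolding posCone_def by (rule CollectI, rule exI[of _ "[y]"]) simp

lemma posCone_sq_herm: "herm y \<Longrightarrow> y * y \<in> posCone"
  using posCone_sq[of y] by simp

lemma sum_list_conj: "invol z * sum_list (map (\<lambda>y. invol y * y) xs) * z
   = sum_list (map (\<lambda>y. invol y * y) (map (\<lambda>y. y * (z::'a::star_algebra)) xs))"
  by (induction xs) (simp_all add: algebra_simps invol_mult)

lemma posCone_conj: "p \<in> posCone \<Longrightarrow> invol z * p * z \<in> posCone"
  unfolding posCone_def using sum_list_conj by blast

lemma posCone_conj_herm: "p \<in> posCone \<Longrightarrow> herm z \<Longrightarrow> z * p * z \<in> posCone"
  using posCone_conj[of p z] by simp

lemma posCone_scale_nat: "p \<in> posCone \<Longrightarrow> scaleQ (of_nat n) p \<in> posCone"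
proof (induction n)
  case 0 then show ?case by simp
next
  case (Suc n)
  have "scaleQ (of_nat (Suc n)) p = scaleQ (of_nat n) p + p"
    by (simp add: scaleQ_add_left scaleQ_one)
  then show ?case using Suc posCone_add by simp
qed

lemma posCone_scale_sq: "p \<in> posCone \<Longrightarrow> scaleQ (r * r) p \<in> posCone"
proof -
  assume "p \<in> posCone"
  then have "invol (ratA r) * p * ratA r \<in> posCone" by (rule posCone_conj)
  moreover have "invol (ratA r) * p * ratA r = scaleQ (r * r) p"
    by (simp add: ratA_mult_left ratA_mult_right scaleQ_scaleQ)
  ultimately show ?thesis by simp
qed

lemma posCone_scale: assumes "p \<in> posCone" "(q::rat) \<ge> 0" shows "scaleQ q p \<in> posCone"
proof -
  obtain a b where ab: "quotient_of q = (a, b)" by (cases "quotient_of q")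
  then have q: "q = of_int a / of_int b" and b: "b > 0" by (auto simp: quotient_of_div quotient_of_denom_pos)
  then have a: "a \<ge> 0" using assms(2)
    by (auto simp: zero_le_divide_iff)
  have "q = of_nat (nat (a * b)) * ((1 / of_int b) * (1 / of_int b))"
    using a b q by (simp add: field_simps)
  then have "scaleQ q p = scaleQ (of_nat (nat (a * b))) (scaleQ ((1 / of_int b) * (1 / of_int b)) p)"
    by (simp add: scaleQ_scaleQ)
  then show ?thesis using posCone_scale_nat posCone_scale_sq[OF assms(1), of "1 / of_int b"] by simp
qed

lemma posCone_ratA: "(q::rat) \<ge> 0 \<Longrightarrow> ratA q \<in> posCone"
  unfolding ratA_def by (rule posCone_scale) (use posCone_sq[of 1] in simp_all)

lemma herm_add: "herm a \<Longrightarrow> herm b \<Longrightarrow> herm (a + b)" by (simp add: invol_add)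
lemma herm_diff: "herm a \<Longrightarrow> herm b \<Longrightarrow> herm (a - b)" by (simp add: invol_diff)
lemma herm_minus: "herm a \<Longrightarrow> herm (- a)" by (simp add: invol_minus)
lemma herm_scaleQ: "herm a \<Longrightarrow> herm (scaleQ q a)" by (simp add: invol_scaleQ)
lemma herm_ratA: "herm (ratA q)" by simp
lemma herm_mult: "herm a \<Longrightarrow> herm b \<Longrightarrow> a * b = b * a \<Longrightarrow> herm (a * b)" by (simp add: invol_mult)
lemma herm_power: "herm a \<Longrightarrow> herm (a ^ n)"
  by (induction n) (simp_all add: invol_mult power_commutes)
lemma herm_sum: "(\<And>i. i \<in> S \<Longrightarrow> herm (f i)) \<Longrightarrow> herm (sum f S)"
  by (simp add: invol_sum)
lemma herm_sq: "herm (invol a * a)" by (simp add: invol_mult invol_invol)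

section \<open>Norm bounds via order intervals\<close>

definition ib :: "'a::star_algebra \<Rightarrow> rat \<Rightarrow> bool" where
  "ib z g \<longleftrightarrow> ratA g - z \<in> posCone \<and> ratA g + z \<in> posCone"

definition nb :: "'a::star_algebra \<Rightarrow> rat \<Rightarrow> bool" where
  "nb z g \<longleftrightarrow> ratA (g * g) - invol z * z \<in> posCone"

lemma central_identity1:
  fixes M u :: "'b::ring_1"
  assumes c: "M * u = u * M"
  shows "(M - u) * (M + u) * (M - u) + (M + u) * (M - u) * (M + u) = (M * M - u * u) * (M + M)"
proof -
  have c2: "u * (M * z) = M * (u * z)" for z by (metis c mult.assoc)
  show ?thesis by (simp add: algebra_simps c c2)
qed

lemma central_identity2:
  fixes M u :: "'b::ring_1"
  assumes c: "M * u = u * M"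
  shows "(M - u) * (M - u) + (M * M - u * u) = (M - u) * (M + M)"
proof -
  have c2: "u * (M * z) = M * (u * z)" for z by (metis c mult.assoc)
  show ?thesis by (simp add: algebra_simps c c2)
qed

lemma ib_nb:
  fixes u :: "'a::star_algebra"
  assumes "ib u m" "m > 0" "herm u"
  shows "nb u m"
proof -
  let ?M = "ratA m :: 'a"
  have "(?M - u) * (?M + u) * (?M - u) \<in> posCone"
    using assms by (intro posCone_conj_herm) (auto simp: ib_def herm_diff)
  moreover have "(?M + u) * (?M - u) * (?M + u) \<in> posCone"
    using assms by (intro posCone_conj_herm) (auto simp: ib_def herm_add)
  ultimately have "(?M * ?M - u * u) * (?M + ?M) \<in> posCone"
    using central_identity1[OF ratA_commute[of m u]] posCone_add by metis
  then have "scaleQ (1 / (2 * m)) ((?M * ?M - u * u) * (?M + ?M)) \<in> posCone"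
    using assms(2) by (intro posCone_scale) auto
  moreover have "scaleQ (1 / (2 * m)) ((?M * ?M - u * u) * (?M + ?M)) = ?M * ?M - u * u"
  proof -
    have "?M + ?M = ratA (2 * m)" by (simp add: ratA_add[symmetric])
    then have "(?M * ?M - u * u) * (?M + ?M) = scaleQ (2 * m) (?M * ?M - u * u)"
      by (simp add: ratA_mult_right)
    then show ?thesis using assms(2) by (simp add: scaleQ_scaleQ scaleQ_one)
  qed
  ultimately show ?thesis using assms(3) by (simp add: nb_def ratA_mult)
qed

lemma nb_ib_half:
  fixes u :: "'a::star_algebra"
  assumes "nb u m" "m > 0" "herm u"
  shows "ratA m - u \<in> posCone"
proof -
  let ?M = "ratA m :: 'a"
  have "(?M - u) * (?M - u) + (?M * ?M - u * u) \<in> posCone"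
    using assms by (intro posCone_add posCone_sq_herm) (auto simp: nb_def ratA_mult herm_diff)
  then have "(?M - u) * (?M + ?M) \<in> posCone"
    using central_identity2[OF ratA_commute[of m u]] by metis
  then have "scaleQ (1 / (2 * m)) ((?M - u) * (?M + ?M)) \<in> posCone"
    using assms(2) by (intro posCone_scale) auto
  moreover have "scaleQ (1 / (2 * m)) ((?M - u) * (?M + ?M)) = ?M - u"
  proof -
    have "?M + ?M = ratA (2 * m)" by (simp add: ratA_add[symmetric])
    then have "(?M - u) * (?M + ?M) = scaleQ (2 * m) (?M - u)"
      by (simp add: ratA_mult_right)
    then show ?thesis using assms(2) by (simp add: scaleQ_scaleQ scaleQ_one)
  qed
  ultimately show ?thesis by simp
qed

lemma nb_minus: "nb (- u) m \<longleftrightarrow> nb u m"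
  by (simp add: nb_def invol_minus)

lemma nb_ib:
  fixes u :: "'a::star_algebra"
  assumes "nb u m" "m > 0" "herm u"
  shows "ib u m"
  using nb_ib_half[OF assms] nb_ib_half[of "-u" m] assms
  by (simp add: ib_def nb_minus herm_minus)



lemma nb_mult:
  fixes a b :: "'a::star_algebra"
  assumes "nb a \<alpha>" "nb b \<beta>"
  shows "nb (a * b) (\<alpha> * \<beta>)"
proof -
  have "invol b * (ratA (\<alpha> * \<alpha>) - invol a * a) * b \<in> posCone"
    using assms(1) by (intro posCone_conj) (simp add: nb_def)
  moreover have "scaleQ (\<alpha> * \<alpha>) (ratA (\<beta> * \<beta>) - invol b * b) \<in> posCone"
    using assms(2) by (intro posCone_scale) (simp_all add: nb_def)
  ultimately have "invol b * (ratA (\<alpha> * \<alpha>) - invol a * a) * b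
     + scaleQ (\<alpha> * \<alpha>) (ratA (\<beta> * \<beta>) - invol b * b) \<in> posCone"
    by (rule posCone_add)
  moreover have "invol b * (ratA (\<alpha> * \<alpha>) - invol a * a) * b
     + scaleQ (\<alpha> * \<alpha>) (ratA (\<beta> * \<beta>) - invol b * b)
     = ratA ((\<alpha> * \<beta>) * (\<alpha> * \<beta>)) - invol (a * b) * (a * b)"
  proof -
    have e1: "invol b * (ratA (\<alpha> * \<alpha>) * b) = scaleQ (\<alpha> * \<alpha>) (invol b * b)"
      by (simp add: ratA_mult_left scaleQ_mult_right')
    have e2: "scaleQ (\<alpha> * \<alpha>) (ratA (\<beta> * \<beta>)) = (ratA ((\<alpha> * \<beta>) * (\<alpha> * \<beta>)) :: 'a)"
      by (simp add: scaleQ_ratA algebra_simps)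
    have e3: "invol b * (ratA (\<alpha> * \<alpha>) - invol a * a) * b
        = invol b * (ratA (\<alpha> * \<alpha>) * b) - invol b * (invol a * (a * b))"
      by (simp only: invol_mult right_diff_distrib left_diff_distrib mult.assoc)
    have e4: "scaleQ (\<alpha> * \<alpha>) (ratA (\<beta> * \<beta>) - invol b * b)
        = scaleQ (\<alpha> * \<alpha>) (ratA (\<beta> * \<beta>)) - scaleQ (\<alpha> * \<alpha>) (invol b * b)"
      by (rule scaleQ_diff_right)
    show ?thesis unfolding e3 e4 e1 e2 by (simp add: invol_mult mult.assoc)
  qed
  ultimately show ?thesis by (simp add: nb_def)
qed

lemma posCone_eq: "p \<in> posCone \<Longrightarrow> q \<in> posCone \<Longrightarrow> x = p + q \<Longrightarrow> x \<in> posCone"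
  using posCone_add by simp

lemma ib_zero: "g \<ge> 0 \<Longrightarrow> ib 0 g"
  by (simp add: ib_def posCone_ratA)

lemma ib_one: "ib 1 1"
proof -
  have "ratA 2 = (2::'a)" using ratA_add[of 1 1] by simp
  moreover have "(ratA 2 :: 'a) \<in> posCone" by (rule posCone_ratA) simp
  ultimately have "(2::'a) \<in> posCone" by (simp only:)
  then show ?thesis by (simp add: ib_def)
qed

lemma ib_minus: "ib (- z) g \<longleftrightarrow> ib z g"
  by (auto simp: ib_def)

lemma ib_mono: assumes "ib z g" "g \<le> g'" shows "ib z g'"
proof -
  have e1: "ratA g' - z = (ratA g - z) + ratA (g' - g)" and e2: "ratA g' + z = (ratA g + z) + ratA (g' - g)"
    by (simp_all add: ratA_diff)
  have A: "(ratA (g' - g) :: 'a) \<in> posCone" using assms(2) by (intro posCone_ratA) simp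
  show ?thesis unfolding ib_def using posCone_eq[OF _ A e1] posCone_eq[OF _ A e2] assms(1)[unfolded ib_def]
    by blast
qed

lemma ib_add: assumes "ib a \<alpha>" "ib b \<beta>" shows "ib (a + b) (\<alpha> + \<beta>)"
proof -
  have "ratA (\<alpha> + \<beta>) - (a + b) = (ratA \<alpha> - a) + (ratA \<beta> - b)"
       "ratA (\<alpha> + \<beta>) + (a + b) = (ratA \<alpha> + a) + (ratA \<beta> + b)"
    by (simp_all add: ratA_add)
  then show ?thesis using assms posCone_eq unfolding ib_def by metis
qed

lemma ib_diff: assumes "ib a \<alpha>" "ib b \<beta>" shows "ib (a - b) (\<alpha> + \<beta>)"
  using ib_add[OF assms(1), of "-b" \<beta>] assms(2) by (simp add: ib_minus)

lemma ib_scale: assumes "ib z g" shows "ib (scaleQ q z) (\<bar>q\<bar> * g)"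
proof (cases "q \<ge> 0")
  case True
  have "ratA (\<bar>q\<bar> * g) - scaleQ q z = scaleQ q (ratA g - z)"
       "ratA (\<bar>q\<bar> * g) + scaleQ q z = scaleQ q (ratA g + z)"
    using True by (simp_all add: scaleQ_diff_right scaleQ_add_right scaleQ_ratA)
  then show ?thesis using assms True posCone_scale by (auto simp: ib_def)
next
  case False
  have "ratA (\<bar>q\<bar> * g) - scaleQ q z = scaleQ (-q) (ratA g + z)"
       "ratA (\<bar>q\<bar> * g) + scaleQ q z = scaleQ (-q) (ratA g - z)"
    using False by (simp_all add: scaleQ_diff_right scaleQ_add_right scaleQ_ratA scaleQ_minus_left)
  then show ?thesis using assms False posCone_scale[of _ "-q"] by (auto simp: ib_def)
qed

lemma ib_sum:
  assumes "finite S" "\<And>i. i \<in> S \<Longrightarrow> ib (f i) (b i)" "\<And>i. i \<in> S \<Longrightarrow> b i \<ge> 0"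
  shows "ib (sum f S) (sum b S)"
  using assms by (induction S rule: finite_induct) (auto intro: ib_add simp: ib_zero)

lemma ib_mult:
  fixes a b :: "'a::star_algebra"
  assumes "ib a \<alpha>" "ib b \<beta>" "\<alpha> > 0" "\<beta> > 0" "herm a" "herm b" "a * b = b * a"
  shows "ib (a * b) (\<alpha> * \<beta>)"
  using nb_ib[OF nb_mult[OF ib_nb[OF assms(1,3,5)] ib_nb[OF assms(2,4,6)]]] assms
  by (simp add: herm_mult)

lemma ib_power:
  fixes a :: "'a::star_algebra"
  assumes "ib a m" "m > 0" "herm a"
  shows "ib (a ^ n) (m ^ n)"
proof (induction n)
  case 0 then show ?case by (simp add: ib_one)
next
  case (Suc n)
  show ?case using ib_mult[OF assms(1) Suc assms(2) _ assms(3) herm_power[OF assms(3)]] assms(2)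
    by (simp add: power_commutes)
qed

section \<open>Connection with anorm\<close>

lemma anorm_nonneg: "0 \<le> anorm (z::'a::star_algebra)"
proof (cases "bound_set z = {}")
  case True then show ?thesis by (simp add: anorm_def)
next
  case False
  have "0 \<le> Inf (real_of_rat ` bound_set z)"
    using False by (intro cInf_greatest) (auto simp: bound_set_def)
  then show ?thesis using False by (simp add: anorm_def)
qed

lemma nb_anorm:
  fixes z :: "'a::star_algebra"
  assumes "nb z g" "g > 0"
  shows "anorm z \<le> ereal (real_of_rat g)"
proof -
  have mem: "g * g \<in> bound_set z" using assms by (simp add: bound_set_def sle_def nb_def)
  then have ne: "bound_set z \<noteq> {}" by auto
  have "Inf (real_of_rat ` bound_set z) \<le> real_of_rat (g * g)"
    using mem by (intro cInf_lower) (auto simp: bound_set_def bdd_below_def intro!: exI[of _ 0])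
  then have "sqrt (Inf (real_of_rat ` bound_set z)) \<le> sqrt (real_of_rat g * real_of_rat g)"
    by (intro real_sqrt_le_mono) (simp add: of_rat_mult)
  also have "sqrt (real_of_rat g * real_of_rat g) = real_of_rat g" using assms(2) by simp
  finally have "sqrt (Inf (real_of_rat ` bound_set z)) \<le> real_of_rat g" .
  then show ?thesis using ne by (simp add: anorm_def)
qed

lemma anorm_nb:
  fixes z :: "'a::star_algebra"
  assumes "anorm z < ereal (real_of_rat g)" "g > 0"
  shows "nb z g"
proof -
  have ne: "bound_set z \<noteq> {}" using assms(1) by (auto simp: anorm_def)
  then have "sqrt (Inf (real_of_rat ` bound_set z)) < real_of_rat g"
    using assms(1) by (simp add: anorm_def)
  have "Inf (real_of_rat ` bound_set z) < real_of_rat g * real_of_rat g"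
  proof (rule ccontr)
    assume "\<not> ?thesis"
    then have "sqrt (real_of_rat g * real_of_rat g) \<le> sqrt (Inf (real_of_rat ` bound_set z))"
      by (intro real_sqrt_le_mono) simp
    moreover have "sqrt (real_of_rat g * real_of_rat g) = real_of_rat g" using assms(2) by simp
    ultimately have "real_of_rat g \<le> sqrt (Inf (real_of_rat ` bound_set z))" by simp
    then show False using \<open>sqrt (Inf (real_of_rat ` bound_set z)) < real_of_rat g\<close> by simp
  qed
  then obtain y where "y \<in> real_of_rat ` bound_set z" "y < real_of_rat g * real_of_rat g"
    using ne by (meson cInf_lessD image_is_empty)
  then obtain \<beta> where b: "\<beta> \<in> bound_set z" "real_of_rat \<beta> < real_of_rat (g * g)"
    by (auto simp: of_rat_mult)
  then have lt: "\<beta> < g * g" by (simp add: of_rat_less)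
  have e: "ratA (g * g) - invol z * z = (ratA \<beta> - invol z * z) + ratA (g * g - \<beta>)"
    by (simp add: ratA_diff)
  have A: "(ratA (g * g - \<beta>) :: 'a) \<in> posCone" using lt by (intro posCone_ratA) simp
  have "ratA \<beta> - invol z * z \<in> posCone" using b(1) by (simp add: bound_set_def sle_def)
  then show ?thesis unfolding nb_def using posCone_eq[OF _ A e] by blast
qed



definition gq :: "nat \<Rightarrow> rat" where "gq k = (1/2 :: rat) gchoose k"

lemma gq_Suc: "gq (Suc k) = gq k * (1/2 - of_nat k) / (of_nat k + 1)"
proof -
  have "(1/2::rat) * gq k = of_nat k * gq k + of_nat (Suc k) * gq (Suc k)"
    unfolding gq_def by (rule gbinomial_mult_1)
  then show ?thesis by (simp add: field_simps)
qed

lemma gq_0 [simp]: "gq 0 = 1" by (simp add: gq_def)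
lemma gq_1 [simp]: "gq (Suc 0) = 1/2" by (simp add: gq_def)

definition dq :: "nat \<Rightarrow> rat" where "dq k = (2 * of_nat k + 2) * \<bar>gq (Suc k)\<bar>"

lemma dq_0 [simp]: "dq 0 = 1" by (simp add: dq_def)

lemma abs_gq_SS: "\<bar>gq (Suc (Suc k))\<bar> = \<bar>gq (Suc k)\<bar> * (2 * of_nat k + 1) / (2 * of_nat k + 4)"
proof -
  have "gq (Suc (Suc k)) = gq (Suc k) * (- (2 * of_nat k + 1) / (2 * of_nat k + 4))"
    by (simp add: gq_Suc[of "Suc k"] field_simps)
  then show ?thesis by (simp add: abs_mult abs_divide)
qed

lemma dq_Suc: "dq (Suc k) = dq k * (2 * of_nat k + 1) / (2 * of_nat k + 2)"
  unfolding dq_def abs_gq_SS by (simp add: field_simps)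

lemma abs_gq_Suc: "\<bar>gq (Suc k)\<bar> = dq k - dq (Suc k)"
  unfolding dq_def abs_gq_SS by (simp add: field_simps)

lemma dq_nonneg: "dq k \<ge> 0" by (simp add: dq_def)

lemma dq_decr: "dq (Suc k) \<le> dq k"
  using abs_gq_Suc[of k] by simp

lemma dq_mono: "m \<le> n \<Longrightarrow> dq n \<le> dq m"
  by (induction n rule: dec_induct) (auto intro: order_trans[OF dq_decr])

lemma dq_sq: "dq k * dq k * (2 * of_nat k + 1) \<le> 1"
proof (induction k)
  case 0 then show ?case by simp
next
  case (Suc k)
  have "dq (Suc k) * dq (Suc k) * (2 * of_nat (Suc k) + 1)
      = (dq k * dq k * (2 * of_nat k + 1)) * ((2 * of_nat k + 1) * (2 * of_nat k + 3) / ((2 * of_nat k + 2) * (2 * of_nat k + 2)))"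
    by (simp add: dq_Suc field_simps)
  also have "\<dots> \<le> 1 * 1"
  proof (rule mult_mono)
    show "(2 * of_nat k + 1) * (2 * of_nat k + 3) / ((2 * of_nat k + 2) * (2 * of_nat k + 2)) \<le> (1::rat)"
    proof -
      have "(2 * of_nat k + 1) * (2 * of_nat k + 3) \<le> ((2 * of_nat k + 2) * (2 * of_nat k + 2) :: rat)"
        by (simp add: algebra_simps)
      then show ?thesis by simp
    qed
  qed (use Suc in auto)
  finally show ?case by simp
qed

lemma dq_small: assumes "(e::rat) > 0" shows "\<exists>M. dq M \<le> e"
proof -
  obtain M :: nat where M: "1 / (e * e) < of_nat M" using reals_Archimedean2 by blast
  have "dq M * dq M * (2 * of_nat M + 1) \<le> 1" by (rule dq_sq)
  then have "dq M * dq M \<le> 1 / (2 * of_nat M + 1)" by (simp add: field_simps)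
  also have "\<dots> \<le> e * e"
  proof -
    have "1 < e * e * of_nat M" using M assms by (simp add: field_simps)
    also have "\<dots> \<le> e * e * (2 * of_nat M + 1)" by (intro mult_left_mono) auto
    finally show ?thesis by (simp add: field_simps)
  qed
  finally have "dq M * dq M \<le> e * e" .
  then have "dq M \<le> e" using assms dq_nonneg[of M]
    by (metis linorder_not_le mult_strict_mono' less_le_not_le)
  then show ?thesis by blast
qed

lemma tail_sum: "M \<le> N \<Longrightarrow> (\<Sum>k\<in>{M<..N}. \<bar>gq k\<bar>) = dq M - dq N"
proof (induction N rule: dec_induct)
  case base then show ?case by simp
next
  case (step n)
  have "{M<..Suc n} = insert (Suc n) {M<..n}" using step(1) by auto
  then show ?case using step by (simp add: abs_gq_Suc)
qed

lemma total_sum: "(\<Sum>k\<le>N. \<bar>gq k\<bar>) \<le> 2"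
proof -
  have "{..N} = insert 0 {0<..N}" by auto
  then have "(\<Sum>k\<le>N. \<bar>gq k\<bar>) = 1 + (dq 0 - dq N)" by (simp add: tail_sum)
  then show ?thesis using dq_nonneg[of N] by simp
qed

lemma one_gchoose: "(1::rat) gchoose k = (if k \<le> 1 then 1 else 0)"
proof (cases k)
  case 0 then show ?thesis by simp
next
  case (Suc j)
  then show ?thesis
  proof (cases j)
    case 0 then show ?thesis using Suc by simp
  next
    case (Suc i)
    have "((0::rat) + 1) gchoose Suc j = (0 gchoose j) + (0 gchoose Suc j)" by (rule gbinomial_Suc_Suc)
    then show ?thesis using Suc \<open>k = Suc j\<close> by (simp add: gbinomial_0_left)
  qed
qed

lemma vandermonde_gq: "(\<Sum>i\<le>k. gq i * gq (k - i)) = (if k \<le> 1 then 1 else 0)"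
proof -
  have "(\<Sum>i\<le>k. gq i * gq (k - i)) = (1/2 + 1/2 :: rat) gchoose k"
    unfolding gq_def gbinomial_Vandermonde[symmetric] by (simp add: atLeast0AtMost)
  then show ?thesis by (simp add: one_gchoose)
qed

lemma pow_bound: assumes "(a::rat) \<ge> 0" "of_nat n * a \<le> 1/2" shows "(1 + a) ^ n \<le> 1 + 2 * of_nat n * a"
  using assms(2)
proof (induction n)
  case 0 then show ?case by simp
next
  case (Suc n)
  have h: "of_nat n * a \<le> 1/2" using Suc.prems assms(1) by (simp add: algebra_simps)
  have "(1 + a) ^ Suc n = (1 + a) * (1 + a) ^ n" by simp
  also have "\<dots> \<le> (1 + a) * (1 + 2 * of_nat n * a)"
    using Suc.IH[OF h] assms(1) by (intro mult_left_mono) auto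
  also have "\<dots> \<le> 1 + 2 * of_nat (Suc n) * a"
  proof -
    have "a * (2 * of_nat n * a) \<le> a * 1" using h assms(1) by (intro mult_left_mono) auto
    then show ?thesis by (simp add: algebra_simps)
  qed
  finally show ?case .
qed



definition spoly :: "'a::star_algebra \<Rightarrow> nat \<Rightarrow> 'a" where
  "spoly v N = (\<Sum>k\<le>N. scaleQ (gq k) (v ^ k))"

lemma herm_spoly: "herm v \<Longrightarrow> herm (spoly v N)"
  unfolding spoly_def by (intro herm_sum herm_scaleQ herm_power)

definition RR :: "nat \<Rightarrow> (nat \<times> nat) set" where
  "RR N = {(i, j). i \<le> N \<and> j \<le> N \<and> N < i + j}"

lemma finite_RR: "finite (RR N)"
proof -
  have "RR N \<subseteq> {..N} \<times> {..N}" by (auto simp: RR_def)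
  then show ?thesis by (rule finite_subset) auto
qed

lemma low_sum:
  fixes v :: "'a::star_algebra"
  assumes "N \<ge> 1"
  shows "(\<Sum>k<Suc N. scaleQ (if k \<le> 1 then 1 else 0) (v ^ k)) = 1 + v"
  using assms
proof (induction N rule: dec_induct)
  case base
  then show ?case by (simp add: scaleQ_one numeral_2_eq_2 lessThan_Suc)
next
  case (step n)
  then show ?case by simp
qed

lemma sq_expand:
  fixes v :: "'a::star_algebra"
  assumes "N \<ge> 1"
  shows "spoly v N * spoly v N - (1 + v) = (\<Sum>(i,j)\<in>RR N. scaleQ (gq i * gq j) (v ^ (i + j)))"
proof -
  define f where "f = (\<lambda>(i,j). scaleQ (gq i * gq j) (v ^ (i + j)))"
  have "spoly v N * spoly v N = (\<Sum>i\<le>N. \<Sum>j\<le>N. scaleQ (gq i) (v ^ i) * scaleQ (gq j) (v ^ j))"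
    unfolding spoly_def by (rule sum_product)
  also have "\<dots> = (\<Sum>i\<le>N. \<Sum>j\<le>N. f (i, j))"
    by (simp add: f_def scaleQ_mult_left' scaleQ_mult_right' scaleQ_scaleQ power_add mult.commute)
  also have "\<dots> = (\<Sum>p\<in>{..N} \<times> {..N}. f p)"
    by (simp add: sum.cartesian_product)
  also have "{..N} \<times> {..N} = {(i,j). i + j < Suc N} \<union> RR N"
    by (auto simp: RR_def)
  also have "(\<Sum>p\<in>{(i,j). i + j < Suc N} \<union> RR N. f p)
      = (\<Sum>p\<in>{(i,j). i + j < Suc N}. f p) + (\<Sum>p\<in>RR N. f p)"
  proof (rule sum.union_disjoint)
    have "{(i,j). i + j < Suc N} \<subseteq> {..N} \<times> {..N}" by auto
    then show "finite {(i,j). i + j < Suc N}" by (rule finite_subset) auto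
  qed (auto simp: RR_def intro: finite_RR[unfolded RR_def])
  also have "(\<Sum>p\<in>{(i,j). i + j < Suc N}. f p) = 1 + v"
  proof -
    have "(\<Sum>p\<in>{(i,j). i + j < Suc N}. f p)
        = (\<Sum>k<Suc N. \<Sum>i\<le>k. scaleQ (gq i * gq (k - i)) (v ^ (i + (k - i))))"
      unfolding f_def by (rule sum.triangle_reindex)
    also have "\<dots> = (\<Sum>k<Suc N. \<Sum>i\<le>k. scaleQ (gq i * gq (k - i)) (v ^ k))"
      by (intro sum.cong) auto
    also have "\<dots> = (\<Sum>k<Suc N. scaleQ (\<Sum>i\<le>k. gq i * gq (k - i)) (v ^ k))"
      by (simp add: scaleQ_sum_left)
    also have "\<dots> = (\<Sum>k<Suc N. scaleQ (if k \<le> 1 then 1 else 0) (v ^ k))"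
      by (simp add: vandermonde_gq)
    also have "\<dots> = 1 + v" using low_sum[OF assms] .
    finally show ?thesis .
  qed
  finally show ?thesis by (simp add: f_def)
qed

lemma ib_poly_terms1:
  fixes v :: "'a::star_algebra"
  assumes "herm v" "ib v m" "m > 0" "finite S"
  shows "ib (\<Sum>k\<in>S. scaleQ (c k) (v ^ e k)) (\<Sum>k\<in>S. \<bar>c k\<bar> * m ^ e k)"
  using assms(4)
proof (rule ib_sum)
  fix k assume "k \<in> S"
  show "ib (scaleQ (c k) (v ^ e k)) (\<bar>c k\<bar> * m ^ e k)"
    by (intro ib_scale ib_power assms)
  show "0 \<le> \<bar>c k\<bar> * m ^ e k" using assms(3) by simp
qed

lemma RR_sum_bound: "(\<Sum>(i,j)\<in>RR N. \<bar>gq i\<bar> * \<bar>gq j\<bar>) \<le> 4 * dq (N div 2)"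
proof -
  define h where "h = (\<lambda>(i,j). \<bar>gq i\<bar> * \<bar>gq j\<bar>)"
  define A where "A = {..N} \<times> {N div 2<..N}"
  define B where "B = {N div 2<..N} \<times> {..N}"
  have fA: "finite A" and fB: "finite B" by (auto simp: A_def B_def)
  have sub: "RR N \<subseteq> A \<union> B" by (auto simp: RR_def A_def B_def)
  have hn: "\<And>p. 0 \<le> h p" by (auto simp: h_def)
  have "sum h (RR N) \<le> sum h (A \<union> B)"
    using fA fB sub hn by (intro sum_mono2) auto
  also have "\<dots> \<le> sum h A + sum h B"
    using sum.union_inter[OF fA fB, of h] sum_nonneg[of "A \<inter> B" h] hn by simp
  also have "sum h A = (\<Sum>i\<le>N. \<bar>gq i\<bar>) * (\<Sum>j\<in>{N div 2<..N}. \<bar>gq j\<bar>)"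
    by (simp add: A_def h_def sum_product sum.cartesian_product)
  also have "sum h B = (\<Sum>i\<in>{N div 2<..N}. \<bar>gq i\<bar>) * (\<Sum>j\<le>N. \<bar>gq j\<bar>)"
    by (simp add: B_def h_def sum_product sum.cartesian_product)
  also have "(\<Sum>j\<in>{N div 2<..N}. \<bar>gq j\<bar>) = dq (N div 2) - dq N"
    by (rule tail_sum) simp
  finally have "sum h (RR N) \<le> 2 * (\<Sum>i\<le>N. \<bar>gq i\<bar>) * (dq (N div 2) - dq N)" by simp
  also have "\<dots> \<le> 2 * 2 * (dq (N div 2) - dq N)"
    using total_sum[of N] dq_mono[of "N div 2" N] by (intro mult_right_mono mult_left_mono) auto
  also have "\<dots> \<le> 4 * dq (N div 2)" using dq_nonneg[of N] by simp
  finally show ?thesis by (simp add: h_def)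
qed

lemma err_bound:
  fixes v :: "'a::star_algebra"
  assumes "herm v" "\<And>a. a > 0 \<Longrightarrow> ib v (1 + a)" "N \<ge> 1"
  shows "ib (spoly v N * spoly v N - (1 + v)) (8 * dq (N div 2))"
proof -
  define a :: rat where "a = 1 / (4 * of_nat N + 4)"
  have a: "a > 0" by (simp add: a_def)
  have na: "of_nat (2 * N) * a \<le> 1/2" by (simp add: a_def field_simps)
  have p2: "(1 + a) ^ (2 * N) \<le> 2"
  proof -
    have "(1 + a) ^ (2 * N) \<le> 1 + 2 * of_nat (2 * N) * a" by (rule pow_bound) (use a na in auto)
    also have "\<dots> \<le> 2" using na by simp
    finally show ?thesis .
  qed
  have "ib (spoly v N * spoly v N - (1 + v))
        (\<Sum>(i,j)\<in>RR N. \<bar>gq i * gq j\<bar> * (1 + a) ^ (i + j))"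
    unfolding sq_expand[OF assms(3)] case_prod_unfold
    by (rule ib_poly_terms1[where c = "\<lambda>p. gq (fst p) * gq (snd p)" and e = "\<lambda>p. fst p + snd p"])
      (use assms a finite_RR in auto)
  moreover have "(\<Sum>(i,j)\<in>RR N. \<bar>gq i * gq j\<bar> * (1 + a) ^ (i + j)) \<le> (\<Sum>(i,j)\<in>RR N. \<bar>gq i\<bar> * \<bar>gq j\<bar> * 2)"
  proof (rule sum_mono)
    fix p assume "p \<in> RR N"
    then have "fst p + snd p \<le> 2 * N" by (auto simp: RR_def)
    then have "(1 + a) ^ (fst p + snd p) \<le> (1 + a) ^ (2 * N)" using a by (intro power_increasing) auto
    then have "(1 + a) ^ (fst p + snd p) \<le> 2" using p2 by simp
    then show "(case p of (i, j) \<Rightarrow> \<bar>gq i * gq j\<bar> * (1 + a) ^ (i + j)) \<le> (case p of (i, j) \<Rightarrow> \<bar>gq i\<bar> * \<bar>gq j\<bar> * 2)"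
      by (cases p) (simp add: abs_mult mult_left_mono)
  qed
  moreover have "(\<Sum>(i,j)\<in>RR N. \<bar>gq i\<bar> * \<bar>gq j\<bar> * 2) = 2 * (\<Sum>(i,j)\<in>RR N. \<bar>gq i\<bar> * \<bar>gq j\<bar>)"
    by (simp add: sum_distrib_left case_prod_unfold mult.commute)
  ultimately show ?thesis using RR_sum_bound[of N] ib_mono by fastforce
qed

lemma cauchy_bound:
  fixes v :: "'a::star_algebra"
  assumes "herm v" "\<And>a. a > 0 \<Longrightarrow> ib v (1 + a)" "M \<le> N"
  shows "ib (spoly v N - spoly v M) (2 * dq M)"
proof -
  define a :: rat where "a = 1 / (2 * of_nat N + 2)"
  have a: "a > 0" by (simp add: a_def)
  have na: "of_nat N * a \<le> 1/2" by (simp add: a_def field_simps)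
  have p2: "(1 + a) ^ N \<le> 2"
  proof -
    have "(1 + a) ^ N \<le> 1 + 2 * of_nat N * a" by (rule pow_bound) (use a na in auto)
    also have "\<dots> \<le> 2" using na by simp
    finally show ?thesis .
  qed
  have split: "{..N} = {..M} \<union> {M<..N}" using assms(3) by auto
  have "spoly v N = spoly v M + (\<Sum>k\<in>{M<..N}. scaleQ (gq k) (v ^ k))"
    unfolding spoly_def split by (rule sum.union_disjoint) auto
  then have e: "spoly v N - spoly v M = (\<Sum>k\<in>{M<..N}. scaleQ (gq k) (v ^ k))" by simp
  have "ib (spoly v N - spoly v M) (\<Sum>k\<in>{M<..N}. \<bar>gq k\<bar> * (1 + a) ^ k)"
    unfolding e by (rule ib_poly_terms1[where e = "\<lambda>k. k"]) (use assms a in auto)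
  moreover have "(\<Sum>k\<in>{M<..N}. \<bar>gq k\<bar> * (1 + a) ^ k) \<le> (\<Sum>k\<in>{M<..N}. \<bar>gq k\<bar> * 2)"
  proof (rule sum_mono)
    fix k assume "k \<in> {M<..N}"
    then have "(1 + a) ^ k \<le> (1 + a) ^ N" using a by (intro power_increasing) auto
    then show "\<bar>gq k\<bar> * (1 + a) ^ k \<le> \<bar>gq k\<bar> * 2" using p2 by (intro mult_left_mono) auto
  qed
  moreover have "(\<Sum>k\<in>{M<..N}. \<bar>gq k\<bar> * 2) = 2 * (dq M - dq N)"
    using tail_sum[OF assms(3)] by (simp add: sum_distrib_right[symmetric])
  moreover have "2 * (dq M - dq N) \<le> 2 * dq M" using dq_nonneg[of N] by simp
  ultimately show ?thesis using ib_mono by (metis order_trans)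
qed



lemma ib_anorm:
  fixes z :: "'a::star_algebra"
  assumes "herm z" "ib z g" "g > 0"
  shows "anorm z \<le> ereal (real_of_rat g)"
  using nb_anorm[OF ib_nb[OF assms(2,3,1)] assms(3)] .

lemma anorm_tendsto0:
  fixes z :: "nat \<Rightarrow> 'a::star_algebra"
  assumes "\<And>e. e > 0 \<Longrightarrow> \<exists>N. \<forall>n\<ge>N. anorm (z n) \<le> ereal (real_of_rat e)"
  shows "(\<lambda>n. anorm (z n)) \<longlonglongrightarrow> 0"
proof (rule order_tendstoI)
  fix a :: ereal assume "a < 0"
  then have "\<forall>n. a < anorm (z n)" using anorm_nonneg order_less_le_trans by blast
  then show "\<forall>\<^sub>F n in sequentially. a < anorm (z n)" by (simp add: always_eventually)
next
  fix b :: ereal assume b: "0 < b"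
  have "\<exists>e::rat. e > 0 \<and> ereal (real_of_rat e) < b"
  proof (cases b)
    case (real r)
    then have "0 < r" using b by simp
    then obtain q :: rat where "0 < real_of_rat q" "real_of_rat q < r" using of_rat_dense by blast
    then show ?thesis using real by (intro exI[of _ q]) (simp add: of_rat_less[symmetric, of 0])
  next
    case PInf
    then show ?thesis by (intro exI[of _ 1]) simp
  qed (use b in simp)
  then obtain e :: rat where e: "e > 0" "ereal (real_of_rat e) < b" by blast
  obtain N where "\<forall>n\<ge>N. anorm (z n) \<le> ereal (real_of_rat e)" using assms[OF e(1)] by blast
  then show "\<forall>\<^sub>F n in sequentially. anorm (z n) < b"
    unfolding eventually_sequentially using e(2) by (meson order_le_less_trans)
qed

lemma forward:
  fixes x :: "'a::star_algebra"
  assumes "herm x" "cs_pos (cs_of x)" "(\<alpha>::rat) > 0"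
  shows "x + ratA \<alpha> \<in> posCone"
proof -
  obtain y where y: "cs_valid y" "cs_eq (cs_of x) (cs_mult (cs_star y) y)"
    using assms(2) by (auto simp: cs_pos_def)
  define a where "a = fst y"
  define b where "b = snd y"
  have lim: "(\<lambda>n. anorm (x - (invol (a n) * a n + invol (b n) * b n))) \<longlonglongrightarrow> 0"
    using y(2) by (simp add: cs_eq_def cs_of_def cs_mult_def cs_star_def a_def b_def)
  have "(0::ereal) < ereal (real_of_rat \<alpha>)" using assms(3) by simp
  from order_tendstoD(2)[OF lim this] obtain n
    where n: "anorm (x - (invol (a n) * a n + invol (b n) * b n)) < ereal (real_of_rat \<alpha>)"
    by (auto simp: eventually_sequentially)
  define p where "p = invol (a n) * a n + invol (b n) * b n"
  have pP: "p \<in> posCone" unfolding p_def by (intro posCone_add posCone_sq)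
  have hp: "herm p" unfolding p_def by (intro herm_add herm_sq)
  have hd: "herm (x - p)" using assms(1) hp by (rule herm_diff)
  have "nb (x - p) \<alpha>" using anorm_nb[of "x - p" \<alpha>] n assms(3) by (simp add: p_def)
  then have "ib (x - p) \<alpha>" using nb_ib assms(3) hd by blast
  then have "ratA \<alpha> + (x - p) \<in> posCone" by (simp add: ib_def)
  then have "p + (ratA \<alpha> + (x - p)) \<in> posCone" using pP posCone_add by blast
  moreover have "p + (ratA \<alpha> + (x - p)) = x + ratA \<alpha>" by (simp add: algebra_simps)
  ultimately show ?thesis by simp
qed

lemma rat_pos_below:
  assumes "(e::real) > 0" obtains q :: rat where "q > 0" "real_of_rat q < e"
proof -
  obtain q :: rat where "0 < real_of_rat q" "real_of_rat q < e" using of_rat_dense assms by blast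
  then show ?thesis using that by (simp add: of_rat_less[symmetric, of 0])
qed

lemma backward:
  fixes x :: "'a::star_algebra"
  assumes arch: "archimedean_star TYPE('a)" and hx: "herm x"
    and H: "\<And>\<alpha>::rat. \<alpha> > 0 \<Longrightarrow> x + ratA \<alpha> \<in> posCone"
  shows "cs_pos (cs_of x)"
proof -
  have "anorm x < \<infinity>" using arch by (simp add: archimedean_star_def)
  then have "bound_set x \<noteq> {}" by (auto simp: anorm_def)
  then obtain \<beta> where b: "\<beta> > 0" "ratA \<beta> - invol x * x \<in> posCone"
    by (auto simp: bound_set_def sle_def)
  define K where "K = max 1 \<beta>"
  have K1: "K \<ge> 1" and Kb: "\<beta> \<le> K" by (auto simp: K_def)
  have KK: "K \<le> K * K" using K1 by (simp add: mult_le_cancel_left1)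
  have Kpos: "K > 0" using K1 by simp
  have "nb x K"
  proof -
    have e: "ratA (K * K) - invol x * x = (ratA \<beta> - invol x * x) + ratA (K * K - \<beta>)"
      by (simp add: ratA_diff)
    have A: "(ratA (K * K - \<beta>) :: 'a) \<in> posCone" using KK Kb by (intro posCone_ratA) simp
    show ?thesis unfolding nb_def using posCone_eq[OF b(2) A e] .
  qed
  then have "ib x K" using nb_ib Kpos hx by blast
  then have xK: "ratA K - x \<in> posCone" by (simp add: ib_def)
  define q where "q = 1 / (K * K)"
  have qpos: "q > 0" using Kpos by (simp add: q_def)
  define v where "v = scaleQ q x - 1"
  have hv: "herm v" unfolding v_def using hx by (intro herm_diff herm_scaleQ) simp_all
  have ibv: "ib v (1 + \<alpha>)" if \<alpha>: "\<alpha> > 0" for \<alpha>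
  proof -
    have e1: "ratA (1 + \<alpha>) - v = scaleQ q ((ratA K - x) + ratA ((2 + \<alpha>) * (K * K) - K))"
    proof -
      have "scaleQ q ((ratA K - x) + ratA ((2 + \<alpha>) * (K * K) - K))
          = scaleQ q (ratA ((2 + \<alpha>) * (K * K)) - x)"
        by (simp add: ratA_diff)
      also have "\<dots> = ratA (2 + \<alpha>) - scaleQ q x"
        using Kpos by (simp add: scaleQ_diff_right scaleQ_ratA q_def)
      also have "\<dots> = ratA (1 + \<alpha>) - v"
        using ratA_add[of "1 + \<alpha>" 1] by (simp add: v_def add.commute add.left_commute)
      finally show ?thesis by simp
    qed
    have e2: "ratA (1 + \<alpha>) + v = scaleQ q (x + ratA (\<alpha> * (K * K)))"
    proof -
      have "scaleQ q (x + ratA (\<alpha> * (K * K))) = scaleQ q x + ratA \<alpha>"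
        using Kpos by (simp add: scaleQ_add_right scaleQ_ratA q_def)
      also have "\<dots> = ratA (1 + \<alpha>) + v"
        by (simp add: v_def ratA_add)
      finally show ?thesis by simp
    qed
    have "ratA K - x + ratA ((2 + \<alpha>) * (K * K) - K) \<in> posCone"
    proof (rule posCone_add[OF xK posCone_ratA])
      have "K \<le> 2 * (K * K)" using KK Kpos by simp
      also have "\<dots> \<le> (2 + \<alpha>) * (K * K)" using \<alpha> by (intro mult_right_mono) auto
      finally show "0 \<le> (2 + \<alpha>) * (K * K) - K" by simp
    qed
    then have P1: "ratA (1 + \<alpha>) - v \<in> posCone" unfolding e1 using qpos by (intro posCone_scale) auto
    have "x + ratA (\<alpha> * (K * K)) \<in> posCone" using H \<alpha> Kpos by simp
    then have P2: "ratA (1 + \<alpha>) + v \<in> posCone" unfolding e2 using qpos by (intro posCone_scale) auto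
    show ?thesis using P1 P2 by (simp add: ib_def)
  qed
  define a where "a = (\<lambda>n. scaleQ K (spoly v n))"
  have ha: "herm (a n)" for n unfolding a_def by (intro herm_scaleQ herm_spoly hv)
  define y where "y = (a, (\<lambda>_::nat. 0::'a))"
  have anorm0: "anorm (0::'a) \<le> ereal (real_of_rat e)" if "e > 0" for e
    using ib_anorm[of 0 e] ib_zero[of e] that by simp
  have cauchy_a: "acauchy a"
    unfolding acauchy_def
  proof (intro allI impI)
    fix e :: real assume "e > 0"
    then obtain e' :: rat where e': "e' > 0" "real_of_rat e' < e" by (rule rat_pos_below)
    obtain M where M: "dq M \<le> e' / (2 * K)" using dq_small[of "e' / (2 * K)"] e' Kpos by auto
    have bnd: "anorm (a m - a n) \<le> ereal (real_of_rat e')" if "n \<le> m" "M \<le> n" for m n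
    proof -
      have "ib (spoly v m - spoly v n) (2 * dq n)"
        by (rule cauchy_bound) (use hv ibv that in auto)
      then have "ib (scaleQ K (spoly v m - spoly v n)) (\<bar>K\<bar> * (2 * dq n))" by (rule ib_scale)
      moreover have "\<bar>K\<bar> * (2 * dq n) \<le> e'"
      proof -
        have "dq n \<le> dq M" using that by (intro dq_mono) auto
        then have "K * (2 * dq n) \<le> K * (2 * (e' / (2 * K)))" using M Kpos by (intro mult_left_mono) auto
        then show ?thesis using Kpos by simp
      qed
      ultimately have "ib (a m - a n) e'" unfolding a_def scaleQ_diff_right using ib_mono by blast
      then show ?thesis using ib_anorm herm_diff ha e' by blast
    qed
    show "\<exists>N. \<forall>m\<ge>N. \<forall>n\<ge>N. anorm (a m - a n) < ereal e"
    proof (intro exI allI impI)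
      fix m n assume "M \<le> m" "M \<le> n"
      have "anorm (a m - a n) \<le> ereal (real_of_rat e')"
      proof (cases "n \<le> m")
        case True then show ?thesis using bnd \<open>M \<le> n\<close> by blast
      next
        case False
        have "anorm (a n - a m) \<le> ereal (real_of_rat e')" using bnd False \<open>M \<le> m\<close> by simp
        moreover have "a m - a n = - (a n - a m)" by simp
        moreover have "anorm (- z) = anorm z" for z :: 'a
          by (simp add: anorm_def bound_set_def invol_minus)
        ultimately show ?thesis by metis
      qed
      also have "\<dots> < ereal e" using e' by simp
      finally show "anorm (a m - a n) < ereal e" .
    qed
  qed
  have cauchy_0: "acauchy (\<lambda>_. 0::'a)"
    unfolding acauchy_def
  proof (intro allI impI)
    fix e :: real assume "e > 0"
    then obtain e' :: rat where e': "e' > 0" "real_of_rat e' < e" by (rule rat_pos_below)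
    have "anorm (0::'a) < ereal e"
      using anorm0[OF e'(1)] e'(2) by (auto intro: order_le_less_trans)
    then show "\<exists>N. \<forall>m\<ge>N. \<forall>n\<ge>N. anorm ((\<lambda>_. 0::'a) m - (\<lambda>_. 0::'a) n) < ereal e"
      by simp
  qed
  have xv: "x = scaleQ (K * K) (1 + v)"
    using Kpos by (simp add: v_def scaleQ_scaleQ q_def scaleQ_one)
  have fst_eq: "(\<lambda>n. anorm (x - invol (a n) * a n)) \<longlonglongrightarrow> 0"
  proof (rule anorm_tendsto0)
    fix e :: rat assume e: "e > 0"
    obtain M where M: "dq M \<le> e / (8 * (K * K))" using dq_small[of "e / (8 * (K * K))"] e Kpos by auto
    show "\<exists>N. \<forall>n\<ge>N. anorm (x - invol (a n) * a n) \<le> ereal (real_of_rat e)"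
    proof (intro exI allI impI)
      fix n assume n: "Suc (2 * M) \<le> n"
      have "ib (spoly v n * spoly v n - (1 + v)) (8 * dq (n div 2))"
        by (rule err_bound) (use hv ibv n in auto)
      then have "ib (scaleQ (K * K) (spoly v n * spoly v n - (1 + v))) (\<bar>K * K\<bar> * (8 * dq (n div 2)))"
        by (rule ib_scale)
      moreover have "\<bar>K * K\<bar> * (8 * dq (n div 2)) \<le> e"
      proof -
        have "dq (n div 2) \<le> dq M" using n by (intro dq_mono) auto
        then have "(K * K) * (8 * dq (n div 2)) \<le> (K * K) * (8 * (e / (8 * (K * K))))"
          using M Kpos by (intro mult_left_mono) auto
        then show ?thesis using Kpos by simp
      qed
      moreover have "scaleQ (K * K) (spoly v n * spoly v n - (1 + v)) = - (x - invol (a n) * a n)"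
        using ha[of n] by (simp add: xv a_def scaleQ_diff_right scaleQ_mult_left' scaleQ_mult_right' scaleQ_scaleQ)
      ultimately have "ib (x - invol (a n) * a n) e" using ib_mono ib_minus by metis
      then show "anorm (x - invol (a n) * a n) \<le> ereal (real_of_rat e)"
        using ib_anorm[of "x - invol (a n) * a n" e] e hx ha[of n] by (simp add: herm_diff herm_mult)
    qed
  qed
  have snd_eq: "(\<lambda>n. anorm (0::'a)) \<longlonglongrightarrow> 0"
    by (rule anorm_tendsto0) (use anorm0 in blast)
  have "cs_valid y" using cauchy_a cauchy_0 by (simp add: cs_valid_def y_def)
  moreover have "cs_eq (cs_of x) (cs_mult (cs_star y) y)"
    using fst_eq snd_eq by (simp add: cs_eq_def cs_of_def cs_mult_def cs_star_def y_def)
  ultimately show ?thesis unfolding cs_pos_def by blast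
qed

theorem proposition2p8:
  fixes x :: "'a::star_algebra"
  assumes "archimedean_star TYPE('a)"
    and "invol x = x"
  shows "cs_pos (cs_of x) \<longleftrightarrow> (\<forall>\<alpha>::rat. \<alpha> > 0 \<longrightarrow> x + ratA \<alpha> \<in> posCone)"
  using forward[OF assms(2)] backward[OF assms] by blast

end
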